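(* Let $\mathcal{D}=(\Omega,\mathcal{B})$ be a supersimple $2$-$(n,4,\lambda)$ design satisfying property $(\triangle)$, such that $(\Omega,\mathcal{C})$ is a regular two-graph where $\mathcal{C}$ is the set of collinear triples, and let $\mathcal{E}:=\{[a,b]\mid a,b\in\Omega\}$. Then $[x,y]^g=[x^g,y^g]$ for all $g\in\langle\mathcal{E}\rangle$ and all $x,y\in\Omega$.
   Context: A $2$-$(n,4,\lambda)$ design $(\Omega,\mathcal{B})$: $n$ points, a multiset of $4$-subsets (lines), every $2$-subset in exactly $\lambda$ lines; supersimple: distinct lines meet in at most two points. For distinct $a,b$ with lines $\{a,b,a_i,b_i\}$ through them, $[a,b]:=(a,b)\prod_i(a_i,b_i)\in\operatorname{Sym}(\Omega)$; $[a,a]:=1$. Permutations act on the right, products composed left to right, $g^h=h^{-1}gh$. Property $(\triangle)$: if $B_1,B_2\in\mathcal{B}$ with $|B_1\cap B_2|=2$ then $B_1\triangle B_2\in\mathcal{B}$. Regular two-graph: $(\Omega,\mathcal{C})$ is a $2$-$(n,3,\mu)$ design with every $4$-subset containing $0,2$ or $4$ members of $\mathcal{C}$. *)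

theory Defs
  imports Main
begin

definition two_design :: "'a set \<Rightarrow> nat \<Rightarrow> 'a set set \<Rightarrow> nat \<Rightarrow> bool" where
  "two_design Omega k Bs lam \<longleftrightarrow>
     finite Omega \<and>
     (\<forall>B\<in>Bs. B \<subseteq> Omega \<and> card B = k) \<and>
     (\<forall>P. P \<subseteq> Omega \<longrightarrow> card P = 2 \<longrightarrow> card {B\<in>Bs. P \<subseteq> B} = lam)"

definition supersimple :: "'a set set \<Rightarrow> bool" where
  "supersimple Bs \<longleftrightarrow> (\<forall>B1\<in>Bs. \<forall>B2\<in>Bs. B1 \<noteq> B2 \<longrightarrow> card (B1 \<inter> B2) \<le> 2)"

definition prop_triangle :: "'a set set \<Rightarrow> bool" where
  "prop_triangle Bs \<longleftrightarrow>
     (\<forall>B1\<in>Bs. \<forall>B2\<in>Bs. card (B1 \<inter> B2) = 2 \<longrightarrow> (B1 - B2) \<union> (B2 - B1) \<in> Bs)"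

definition collinear_triples :: "'a set set \<Rightarrow> 'a set set" where
  "collinear_triples Bs = {T. card T = 3 \<and> (\<exists>B\<in>Bs. T \<subseteq> B)}"

definition regular_two_graph :: "'a set \<Rightarrow> 'a set set \<Rightarrow> bool" where
  "regular_two_graph Omega Cs \<longleftrightarrow>
     (\<exists>mu. two_design Omega 3 Cs mu) \<and>
     (\<forall>F. F \<subseteq> Omega \<longrightarrow> card F = 4 \<longrightarrow> card {T\<in>Cs. T \<subseteq> F} \<in> {0, 2, 4})"

text \<open>The permutation [a,b] = (a,b) prod_i (a_i,b_i), over the lines {a,b,a_i,b_i}
  through a and b; [a,a] = 1.  Written out pointwise (as functions 'a => 'a,
  identity off Omega): it swaps a and b and, for each line L through a and b,
  swaps the two points of L - {a,b}.  In a supersimple design these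
  transpositions are disjoint, so this is exactly the product.\<close>
definition swp :: "'a set set \<Rightarrow> 'a \<Rightarrow> 'a \<Rightarrow> 'a \<Rightarrow> 'a" where
  "swp Bs a b x =
     (if a = b then x
      else if x = a then b
      else if x = b then a
      else if (\<exists>L\<in>Bs. {a, b, x} \<subseteq> L)
        then (THE y. \<exists>L\<in>Bs. {a, b, x} \<subseteq> L \<and> L = {a, b, x, y} \<and> y \<notin> {a, b, x})
      else x)"

text \<open>The subgroup of Sym(Omega) generated by a set E of permutations
  (functions 'a => 'a; all generators considered here are bijections fixing
  everything outside Omega).\<close>
inductive_set gen_group :: "('a \<Rightarrow> 'a) set \<Rightarrow> ('a \<Rightarrow> 'a) set" for E where
  gen_id: "id \<in> gen_group E"
| gen_elem: "e \<in> E \<Longrightarrow> e \<in> gen_group E"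
| gen_comp: "f \<in> gen_group E \<Longrightarrow> g \<in> gen_group E \<Longrightarrow> f \<circ> g \<in> gen_group E"
| gen_inv: "f \<in> gen_group E \<Longrightarrow> inv f \<in> gen_group E"

end

theory Submission
  imports Defs
begin

definition col :: "'a set set \<Rightarrow> 'a set \<Rightarrow> bool" where
  "col Bs T \<longleftrightarrow> (\<exists>L\<in>Bs. T \<subseteq> L)"

locale D =
  fixes Omega :: "'a set" and Bs :: "'a set set"
  assumes blk: "\<And>B. B \<in> Bs \<Longrightarrow> B \<subseteq> Omega \<and> card B = 4"
    and ss: "supersimple Bs"
    and tr: "prop_triangle Bs"
    and tg: "\<And>F. F \<subseteq> Omega \<Longrightarrow> card F = 4 \<Longrightarrow> card {T\<in>collinear_triples Bs. T \<subseteq> F} \<in> {0,2,4}"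
begin

lemma fin: "B \<in> Bs \<Longrightarrow> finite B"
  using blk[of B] by (intro card_ge_0_finite) auto

lemma colI: "L \<in> Bs \<Longrightarrow> T \<subseteq> L \<Longrightarrow> col Bs T"
  unfolding col_def by blast

lemma uniq3:
  assumes "L1 \<in> Bs" "L2 \<in> Bs" "x\<noteq>y" "x\<noteq>z" "y\<noteq>z" "{x,y,z} \<subseteq> L1" "{x,y,z} \<subseteq> L2"
  shows "L1 = L2"
proof (rule ccontr)
  assume "L1 \<noteq> L2"
  hence "card (L1 \<inter> L2) \<le> 2" using ss assms(1,2) unfolding supersimple_def by blast
  moreover have "card {x,y,z} \<le> card (L1 \<inter> L2)"
    by (rule card_mono) (use fin[OF assms(1)] assms in auto)
  ultimately show False using assms(3-5) by simp
qed

lemma tri6: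
  assumes "{u,v,x,y} \<in> Bs" "{u,v,z,w} \<in> Bs" "distinct [u,v,x,y,z,w]"
  shows "{x,y,z,w} \<in> Bs"
proof -
  have "{u,v,x,y} \<inter> {u,v,z,w} = {u,v}" using assms(3) by auto
  hence "card ({u,v,x,y} \<inter> {u,v,z,w}) = 2" using assms(3) by simp
  hence "({u,v,x,y} - {u,v,z,w}) \<union> ({u,v,z,w} - {u,v,x,y}) \<in> Bs"
    using tr assms(1,2) unfolding prop_triangle_def by blast
  moreover have "({u,v,x,y} - {u,v,z,w}) \<union> ({u,v,z,w} - {u,v,x,y}) = {x,y,z,w}"
    using assms(3) by auto
  ultimately show ?thesis by simp
qed

lemma line3:
  assumes "L \<in> Bs" "{x,y,z} \<subseteq> L" "x\<noteq>y" "x\<noteq>z" "y\<noteq>z"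
  obtains t where "L = {x,y,z,t}" "t \<notin> {x,y,z}"
proof -
  have "card (L - {x,y,z}) = 1"
    using blk[OF assms(1)] fin[OF assms(1)] assms(2-5) by (simp add: card_Diff_subset)
  then obtain t where "L - {x,y,z} = {t}" by (rule card_1_singletonE)
  hence "L = {x,y,z,t}" "t \<notin> {x,y,z}" using assms(2) by auto
  thus ?thesis using that by blast
qed

lemma line_pt:
  assumes "L \<in> Bs" "a \<in> L"
  obtains p q r where "L = {a,p,q,r}" "distinct [a,p,q,r]"
proof -
  have "card (L - {a}) = 3" using blk[OF assms(1)] assms(2) fin[OF assms(1)] by simp
  then obtain p q r where "L - {a} = {p,q,r}" "p\<noteq>q" "q\<noteq>r" "p\<noteq>r" by (auto simp: card_3_iff)
  then have "L = {a,p,q,r}" "distinct [a,p,q,r]" using assms(2) by auto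
  thus ?thesis using that by blast
qed

lemma line_pt2:
  assumes "L \<in> Bs" "a \<in> L" "b \<in> L" "a \<noteq> b"
  obtains p q where "L = {a,b,p,q}" "distinct [a,b,p,q]"
proof -
  have "card (L - {a,b}) = 2" using blk[OF assms(1)] assms(2-4) fin[OF assms(1)]
    by (simp add: card_Diff_subset)
  then obtain p q where "L - {a,b} = {p,q}" "p\<noteq>q" by (auto simp: card_2_iff)
  then have "L = {a,b,p,q}" "distinct [a,b,p,q]" using assms(2-4) by auto
  thus ?thesis using that by blast
qed

lemma line_any:
  assumes "L \<in> Bs"
  obtains p q r w where "L = {p,q,r,w}" "distinct [p,q,r,w]"
proof -
  have "L \<noteq> {}" using blk[OF assms] by auto
  then obtain p where "p \<in> L" by blast
  then show ?thesis using line_pt[OF assms] that by metis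
qed

lemma sub3:
  assumes "T \<subseteq> {w,x,y,z}" "card T = 3" "distinct [w,x,y,z]"
  shows "T = {x,y,z} \<or> T = {w,y,z} \<or> T = {w,x,z} \<or> T = {w,x,y}"
proof -
  have cF: "card {w,x,y,z} = 4" using assms(3) by simp
  have "\<not> {w,x,y,z} \<subseteq> T"
  proof
    assume "{w,x,y,z} \<subseteq> T"
    hence "card {w,x,y,z} \<le> card T" using assms(1) by (intro card_mono) (auto intro: finite_subset)
    thus False using cF assms(2) by simp
  qed
  then obtain e where e: "e \<in> {w,x,y,z}" "e \<notin> T" by blast
  have "T \<subseteq> {w,x,y,z} - {e}" using assms(1) e by auto
  moreover have "card ({w,x,y,z} - {e}) = 3" using e cF by simp
  ultimately have "T = {w,x,y,z} - {e}" using card_subset_eq[of "{w,x,y,z} - {e}" T] assms(2) by auto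
  then show ?thesis using e assms(3) by auto
qed

lemma parity:
  assumes "distinct [w,x,y,z]" "{w,x,y,z} \<subseteq> Omega"
  shows "card {t \<in> {{x,y,z},{w,y,z},{w,x,z},{w,x,y}}. col Bs t} \<in> {0,2,4}"
proof -
  have "{T\<in>collinear_triples Bs. T \<subseteq> {w,x,y,z}} = {t \<in> {{x,y,z},{w,y,z},{w,x,z},{w,x,y}}. col Bs t}"
  proof
    show "{T\<in>collinear_triples Bs. T \<subseteq> {w,x,y,z}} \<subseteq> {t \<in> {{x,y,z},{w,y,z},{w,x,z},{w,x,y}}. col Bs t}"
    proof
      fix T assume "T \<in> {T\<in>collinear_triples Bs. T \<subseteq> {w,x,y,z}}"
      hence "card T = 3" "col Bs T" "T \<subseteq> {w,x,y,z}"
        unfolding collinear_triples_def col_def by auto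
      thus "T \<in> {t \<in> {{x,y,z},{w,y,z},{w,x,z},{w,x,y}}. col Bs t}"
        using sub3[of T w x y z] assms(1) by auto
    qed
    show "{t \<in> {{x,y,z},{w,y,z},{w,x,z},{w,x,y}}. col Bs t} \<subseteq> {T\<in>collinear_triples Bs. T \<subseteq> {w,x,y,z}}"
      using assms(1) by (auto simp: collinear_triples_def col_def)
  qed
  moreover have "card {w,x,y,z} = 4" using assms(1) by simp
  ultimately show ?thesis using tg[OF assms(2)] by simp
qed

lemma trdist:
  assumes "distinct [w,x,y,z]"
  shows "{x,y,z} \<noteq> {w,y,z}" "{x,y,z} \<noteq> {w,x,z}" "{x,y,z} \<noteq> {w,x,y}"
    "{w,y,z} \<noteq> {w,x,z}" "{w,y,z} \<noteq> {w,x,y}" "{w,x,z} \<noteq> {w,x,y}"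
  using assms by (auto simp: insert_eq_iff)

lemma par3:
  assumes "distinct [w,x,y,z]" "{w,x,y,z} \<subseteq> Omega"
    "col Bs {x,y,z}" "col Bs {w,y,z}" "col Bs {w,x,z}"
  shows "col Bs {w,x,y}"
proof (rule ccontr)
  assume n: "\<not> col Bs {w,x,y}"
  have "{t \<in> {{x,y,z},{w,y,z},{w,x,z},{w,x,y}}. col Bs t} = {{x,y,z},{w,y,z},{w,x,z}}"
    using assms n by auto
  moreover have "card {{x,y,z},{w,y,z},{w,x,z}} = 3" using trdist[OF assms(1)] by simp
  ultimately show False using parity[OF assms(1,2)] by simp
qed

lemma par1:
  assumes "distinct [w,x,y,z]" "{w,x,y,z} \<subseteq> Omega"
    "col Bs {x,y,z}" "\<not> col Bs {w,y,z}" "\<not> col Bs {w,x,z}"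
  shows "col Bs {w,x,y}"
proof (rule ccontr)
  assume n: "\<not> col Bs {w,x,y}"
  have "{t \<in> {{x,y,z},{w,y,z},{w,x,z},{w,x,y}}. col Bs t} = {{x,y,z}}"
    using assms n by auto
  thus False using parity[OF assms(1,2)] by simp
qed

lemma swp_moved:
  assumes "a\<noteq>b" "x\<noteq>a" "x\<noteq>b" "col Bs {a,b,x}"
  shows "{a,b,x,swp Bs a b x} \<in> Bs \<and> swp Bs a b x \<notin> {a,b,x}"
proof -
  obtain L where L: "L\<in>Bs" "{a,b,x} \<subseteq> L" using assms(4) unfolding col_def by blast
  obtain y where y: "L = {a,b,x,y}" "y \<notin> {a,b,x}" by (rule line3[OF L(1) L(2)]) (use assms in auto)
  have ex: "\<exists>L\<in>Bs. {a,b,x} \<subseteq> L" using L by blast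
  have sx: "swp Bs a b x = (THE v. \<exists>L\<in>Bs. {a,b,x} \<subseteq> L \<and> L = {a,b,x,v} \<and> v \<notin> {a,b,x})"
    unfolding swp_def using assms(1-3) ex by (simp only: if_False if_True simp_thms)
  have "(THE v. \<exists>L\<in>Bs. {a,b,x} \<subseteq> L \<and> L = {a,b,x,v} \<and> v \<notin> {a,b,x}) = y"
  proof (rule the_equality)
    show "\<exists>L\<in>Bs. {a,b,x} \<subseteq> L \<and> L = {a,b,x,y} \<and> y \<notin> {a,b,x}" using L y by blast
  next
    fix v assume "\<exists>L\<in>Bs. {a,b,x} \<subseteq> L \<and> L = {a,b,x,v} \<and> v \<notin> {a,b,x}"
    then obtain L' where L': "L' \<in> Bs" "L' = {a,b,x,v}" "v \<notin> {a,b,x}" by blast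
    have "L' = L" by (rule uniq3[OF L'(1) L(1), of a b x]) (use assms L L' in auto)
    hence "v \<in> {a,b,x,y}" using L'(2) y(1) by auto
    thus "v = y" using L'(3) by simp
  qed
  thus ?thesis using sx L y by simp
qed

lemma swp_fix: "x\<noteq>a \<Longrightarrow> x\<noteq>b \<Longrightarrow> \<not> col Bs {a,b,x} \<Longrightarrow> swp Bs a b x = x"
  unfolding swp_def col_def by auto

lemma swp_a: "a \<noteq> b \<Longrightarrow> swp Bs a b a = b" unfolding swp_def by auto
lemma swp_b: "a \<noteq> b \<Longrightarrow> swp Bs a b b = a" unfolding swp_def by auto
lemma swp_same: "swp Bs a a = id" unfolding swp_def by auto
lemma swp_sym: "swp Bs a b = swp Bs b a"
proof
  fix x
  have e: "{b,a,x} = {a,b,x}" "\<And>y. {b,a,x,y} = {a,b,x,y}" by auto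
  show "swp Bs a b x = swp Bs b a x"
  proof (cases "a = b \<or> x = a \<or> x = b")
    case True thus ?thesis unfolding swp_def by auto
  next
    case False
    hence f: "a\<noteq>b" "x\<noteq>a" "x\<noteq>b" "b\<noteq>a" by auto
    show ?thesis unfolding swp_def by (simp only: e f if_False simp_thms)
  qed
qed

lemma fourth: "{a,b,x,y} = {a,b,x,v} \<Longrightarrow> y \<notin> {a,b,x} \<Longrightarrow> v \<notin> {a,b,x} \<Longrightarrow> y = v"
  by blast

lemma swp_leq:
  assumes "L \<in> Bs" "{a,b,x} \<subseteq> L" "a\<noteq>b" "x\<noteq>a" "x\<noteq>b"
  shows "L = {a,b,x,swp Bs a b x}"
proof -
  have m: "{a,b,x,swp Bs a b x} \<in> Bs \<and> swp Bs a b x \<notin> {a,b,x}"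
    using swp_moved[OF assms(3,4,5) colI[OF assms(1,2)]] .
  show ?thesis using uniq3[OF assms(1), of "{a,b,x,swp Bs a b x}" a b x] m assms by auto
qed

lemma swp_inv: "a \<noteq> b \<Longrightarrow> swp Bs a b (swp Bs a b x) = x"
proof -
  assume ab: "a \<noteq> b"
  show ?thesis
  proof (cases "x = a \<or> x = b")
    case True thus ?thesis using ab swp_a swp_b by auto
  next
    case False
    show ?thesis
    proof (cases "col Bs {a,b,x}")
      case True
      define y where "y = swp Bs a b x"
      have m: "{a,b,x,y} \<in> Bs" "y \<notin> {a,b,x}" using swp_moved[OF ab _ _ True] False y_def by auto
      have "{a,b,x,y} = {a,b,y,swp Bs a b y}" using swp_leq[OF m(1), of a b y] ab m(2) by auto
      moreover have "swp Bs a b y \<notin> {a,b,y}"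
        using swp_moved[OF ab, of y] m colI[OF m(1), of "{a,b,y}"] by auto
      ultimately have "{a,b,y,x} = {a,b,y,swp Bs a b y}" "x \<notin> {a,b,y}" "swp Bs a b y \<notin> {a,b,y}"
        using m(2) False by (auto simp: insert_commute)
      hence "swp Bs a b y = x" using fourth by metis
      thus ?thesis using y_def by simp
    next
      case nc: False thus ?thesis using False swp_fix by auto
    qed
  qed
qed

end

locale D2 = D +
  fixes a b
  assumes ab: "a \<noteq> b" and aO: "a \<in> Omega" and bO: "b \<in> Omega"
begin

abbreviation s where "s \<equiv> swp Bs a b"

lemma sa: "s a = b" using swp_a[OF ab] .
lemma sb: "s b = a" using swp_b[OF ab] .
lemma mv: "x \<noteq> a \<Longrightarrow> x \<noteq> b \<Longrightarrow> col Bs {a,b,x} \<Longrightarrow> {a,b,x,s x} \<in> Bs \<and> s x \<notin> {a,b,x}"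
  using swp_moved[OF ab] by blast
lemma fx: "x \<noteq> a \<Longrightarrow> x \<noteq> b \<Longrightarrow> \<not> col Bs {a,b,x} \<Longrightarrow> s x = x"
  using swp_fix by blast
lemma sinv: "s (s x) = x" using swp_inv[OF ab] .
lemma sinj: "s x = s y \<Longrightarrow> x = y" by (metis sinv)
lemma inj_s: "inj s" by (rule injI) (rule sinj)

lemma notinM:
  assumes "M \<in> Bs" "a \<in> M" "b \<notin> M" "x \<in> M" "x \<noteq> a" "col Bs {a,b,x}"
  shows "s x \<notin> M"
proof
  assume sx: "s x \<in> M"
  have L: "{a,b,x,s x} \<in> Bs" "s x \<notin> {a,b,x}" using mv assms(3-6) by auto
  have "M = {a,b,x,s x}"
    by (rule uniq3[OF assms(1) L(1), of a x "s x"]) (use assms sx L in auto)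
  thus False using assms(3) by auto
qed

lemma MO: "M \<in> Bs \<Longrightarrow> M \<subseteq> Omega" using blk by blast

lemma B0:
  assumes HM: "M = {a,p,q,r}" "M \<in> Bs" "distinct [a,p,q,r]" "b \<notin> M"
    and np: "\<not> col Bs {a,b,p}" and nq: "\<not> col Bs {a,b,q}" and nr: "\<not> col Bs {a,b,r}"
  shows False
proof -
  have O: "{a,b,p,q,r} \<subseteq> Omega" using MO[OF HM(2)] HM(1) aO bO by auto
  have c1: "col Bs {p,q,a}" by (rule colI[OF HM(2)]) (use HM(1) in auto)
  have c2: "\<not> col Bs {b,q,a}" using nq by (simp add: insert_commute)
  have c3: "\<not> col Bs {b,p,a}" using np by (simp add: insert_commute)
  have bpq: "col Bs {b,p,q}"
    by (rule par1[of b p q a, OF _ _ c1 c2 c3]) (use HM O in auto)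
  then obtain N where N: "N \<in> Bs" "{b,p,q} \<subseteq> N" unfolding col_def by blast
  obtain t where t: "N = {b,p,q,t}" "t \<notin> {b,p,q}"
    by (rule line3[OF N]) (use HM in auto)
  have ta: "t \<noteq> a"
  proof
    assume "t = a"
    hence "N = M" by (intro uniq3[OF N(1) HM(2), of a p q]) (use HM t in auto)
    thus False using HM t by auto
  qed
  have trr: "t \<noteq> r"
  proof
    assume "t = r"
    hence "N = M" by (intro uniq3[OF N(1) HM(2), of p q r]) (use HM t in auto)
    thus False using HM t by auto
  qed
  have e1: "{p,q,a,r} \<in> Bs" using HM(1,2) by (simp add: insert_commute)
  have e2: "{p,q,b,t} \<in> Bs" using N(1) t(1) by (simp add: insert_commute)
  have "{a,r,b,t} \<in> Bs" by (rule tri6[OF e1 e2]) (use HM t ta trr in auto)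
  hence "col Bs {a,b,r}" by (rule colI) auto
  thus False using nr by simp
qed

lemma B1:
  assumes HM: "M = {a,p,q,r}" "M \<in> Bs" "distinct [a,p,q,r]" "b \<notin> M"
    and mp: "col Bs {a,b,p}" and nq: "\<not> col Bs {a,b,q}" and nr: "\<not> col Bs {a,b,r}"
  shows "s ` M \<in> Bs"
proof -
  have Lp: "{a,b,p,s p} \<in> Bs" "s p \<notin> {a,b,p}" using mv[OF _ _ mp] HM by auto
  have pM: "s p \<notin> M" by (rule notinM[OF HM(2) _ HM(4) _ _ mp]) (use HM in auto)
  have e2: "{a,p,b,s p} \<in> Bs" using Lp(1) by (simp add: insert_commute)
  have "{q,r,b,s p} \<in> Bs" by (rule tri6[OF _ e2]) (use HM Lp pM in auto)
  moreover have "s ` M = {q,r,b,s p}"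
    using HM fx[OF _ _ nq] fx[OF _ _ nr] sa by auto
  ultimately show ?thesis by simp
qed

lemma B2:
  assumes HM: "M = {a,p,q,r}" "M \<in> Bs" "distinct [a,p,q,r]" "b \<notin> M"
    and mp: "col Bs {a,b,p}" and mq: "col Bs {a,b,q}" and nr: "\<not> col Bs {a,b,r}"
  shows False
proof -
  have Lp: "{a,b,p,s p} \<in> Bs" "s p \<notin> {a,b,p}" using mv[OF _ _ mp] HM by auto
  have Lq: "{a,b,q,s q} \<in> Bs" "s q \<notin> {a,b,q}" using mv[OF _ _ mq] HM by auto
  have pM: "s p \<notin> M" by (rule notinM[OF HM(2) _ HM(4) _ _ mp]) (use HM in auto)
  have qM: "s q \<notin> M" by (rule notinM[OF HM(2) _ HM(4) _ _ mq]) (use HM in auto)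
  have pq: "s p \<noteq> s q" using HM(3) sinj by auto
  have e2: "{a,p,b,s p} \<in> Bs" using Lp(1) by (simp add: insert_commute)
  have N1: "{q,r,b,s p} \<in> Bs" by (rule tri6[OF _ e2]) (use HM Lp pM in auto)
  have e3: "{b,q,r,s p} \<in> Bs" using N1 by (simp add: insert_commute)
  have e4: "{b,q,a,s q} \<in> Bs" using Lq(1) by (simp add: insert_commute)
  have N2: "{r,s p,a,s q} \<in> Bs" by (rule tri6[OF e3 e4]) (use HM Lp Lq pM qM pq ab in auto)
  have e5: "{a,s p,r,s q} \<in> Bs" using N2 by (simp add: insert_commute)
  have e6: "{a,s p,b,p} \<in> Bs" using Lp(1) by (simp add: insert_commute)
  have N3: "{r,s q,b,p} \<in> Bs" by (rule tri6[OF e5 e6]) (use HM Lp Lq pM qM pq ab in auto)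
  have O: "{a,b,p,r} \<subseteq> Omega" using MO[OF HM(2)] HM(1) aO bO by auto
  have c1: "col Bs {b,r,p}" by (rule colI[OF N3]) auto
  have c2: "col Bs {a,r,p}" by (rule colI[OF HM(2)]) (use HM(1) in auto)
  have c3: "col Bs {a,b,p}" using mp .
  have "col Bs {a,b,r}" by (rule par3[of a b r p, OF _ _ c1 c2 c3]) (use HM O ab in auto)
  thus False using nr by simp
qed

lemma B3:
  assumes HM: "M = {a,p,q,r}" "M \<in> Bs" "distinct [a,p,q,r]" "b \<notin> M"
    and mp: "col Bs {a,b,p}" and mq: "col Bs {a,b,q}" and mr: "col Bs {a,b,r}"
  shows "s ` M \<in> Bs"
proof -
  have Lp: "{a,b,p,s p} \<in> Bs" "s p \<notin> {a,b,p}" using mv[OF _ _ mp] HM by auto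
  have Lq: "{a,b,q,s q} \<in> Bs" "s q \<notin> {a,b,q}" using mv[OF _ _ mq] HM by auto
  have Lr: "{a,b,r,s r} \<in> Bs" "s r \<notin> {a,b,r}" using mv[OF _ _ mr] HM by auto
  have pM: "s p \<notin> M" by (rule notinM[OF HM(2) _ HM(4) _ _ mp]) (use HM in auto)
  have qM: "s q \<notin> M" by (rule notinM[OF HM(2) _ HM(4) _ _ mq]) (use HM in auto)
  have rM: "s r \<notin> M" by (rule notinM[OF HM(2) _ HM(4) _ _ mr]) (use HM in auto)
  have pq: "s p \<noteq> s q" "s p \<noteq> s r" "s q \<noteq> s r" using HM(3) sinj by auto
  have e2: "{a,p,b,s p} \<in> Bs" using Lp(1) by (simp add: insert_commute)
  have N1: "{q,r,b,s p} \<in> Bs" by (rule tri6[OF _ e2]) (use HM Lp pM in auto)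
  have e3: "{b,q,r,s p} \<in> Bs" using N1 by (simp add: insert_commute)
  have e4: "{b,q,a,s q} \<in> Bs" using Lq(1) by (simp add: insert_commute)
  have N2: "{r,s p,a,s q} \<in> Bs" by (rule tri6[OF e3 e4]) (use HM Lp Lq pM qM pq ab in auto)
  have e5: "{a,r,s p,s q} \<in> Bs" using N2 by (simp add: insert_commute)
  have e6: "{a,r,b,s r} \<in> Bs" using Lr(1) by (simp add: insert_commute)
  have N3: "{s p,s q,b,s r} \<in> Bs" by (rule tri6[OF e5 e6]) (use HM Lp Lq Lr pM qM rM pq ab in auto)
  moreover have "s ` M = {s p,s q,b,s r}" using HM sa by auto
  ultimately show ?thesis by simp
qed

lemma caseB:
  assumes "M \<in> Bs" "a \<in> M" "b \<notin> M"
  shows "s ` M \<in> Bs"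
proof -
  obtain p q r where pqr: "M = {a,p,q,r}" "distinct [a,p,q,r]" using line_pt[OF assms(1,2)] by blast
  have M2: "M = {a,p,r,q}" "M = {a,q,r,p}" "M = {a,q,p,r}" "M = {a,r,p,q}" using pqr(1) by auto
  have d2: "distinct [a,p,r,q]" "distinct [a,q,r,p]" "distinct [a,q,p,r]" "distinct [a,r,p,q]"
    using pqr(2) by auto
  note H = assms(1) assms(3)
  show ?thesis
  proof (cases "col Bs {a,b,p}"; cases "col Bs {a,b,q}"; cases "col Bs {a,b,r}")
  qed (use B0[OF pqr(1) H(1) pqr(2) H(2)] B1[OF pqr(1) H(1) pqr(2) H(2)]
      B1[OF M2(3) H(1) d2(3) H(2)] B1[OF M2(4) H(1) d2(4) H(2)]
      B2[OF pqr(1) H(1) pqr(2) H(2)] B2[OF M2(1) H(1) d2(1) H(2)] B2[OF M2(2) H(1) d2(2) H(2)]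
      B3[OF pqr(1) H(1) pqr(2) H(2)] in blast)+
qed

lemma C1:
  assumes HM: "M = {x,y,z,w}" "M \<in> Bs" "distinct [x,y,z,w]" "a \<notin> M" "b \<notin> M"
    and cxy: "col Bs {a,x,y}"
  shows "s ` M \<in> Bs"
proof -
  obtain K where K: "K \<in> Bs" "{a,x,y} \<subseteq> K" using cxy unfolding col_def by blast
  obtain t where t: "K = {a,x,y,t}" "t \<notin> {a,x,y}"
    by (rule line3[OF K]) (use HM in auto)
  have tz: "t \<noteq> z"
  proof
    assume "t = z"
    hence "K = M" by (intro uniq3[OF K(1) HM(2), of x y z]) (use HM t in auto)
    thus False using HM t by auto
  qed
  have tw: "t \<noteq> w"
  proof
    assume "t = w"
    hence "K = M" by (intro uniq3[OF K(1) HM(2), of x y w]) (use HM t in auto)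
    thus False using HM t by auto
  qed
  have e1: "{x,y,a,t} \<in> Bs" using K(1) t(1) by (simp add: insert_commute)
  have e2: "{x,y,z,w} \<in> Bs" using HM(1,2) by simp
  have K': "{a,t,z,w} \<in> Bs" by (rule tri6[OF e1 e2]) (use HM t tz tw in auto)
  show ?thesis
  proof (cases "t = b")
    case True
    have k1: "{a,b,x,y} \<in> Bs" using K(1) t(1) True by (simp add: insert_commute)
    have k2: "{a,b,z,w} \<in> Bs" using K' True by simp
    have sxy: "s x = y"
    proof -
      have "{a,b,x,y} = {a,b,x,s x}" by (rule swp_leq[OF k1]) (use HM ab in auto)
      moreover have "s x \<notin> {a,b,x}" using mv[of x] colI[OF k1, of "{a,b,x}"] HM by auto
      moreover have "y \<notin> {a,b,x}" using HM ab by auto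
      ultimately show ?thesis using fourth by metis
    qed
    have szw: "s z = w"
    proof -
      have "{a,b,z,w} = {a,b,z,s z}" by (rule swp_leq[OF k2]) (use HM ab in auto)
      moreover have "s z \<notin> {a,b,z}" using mv[of z] colI[OF k2, of "{a,b,z}"] HM by auto
      moreover have "w \<notin> {a,b,z}" using HM ab by auto
      ultimately show ?thesis using fourth by metis
    qed
    have "s y = x" "s w = z" using sxy szw sinv by metis+
    hence "s ` M = M" using HM(1) sxy szw by auto
    thus ?thesis using HM(2) by simp
  next
    case False
    have bK: "b \<notin> {a,x,y,t}" using HM False ab by auto
    have bK': "b \<notin> {a,t,z,w}" using HM False ab by auto
    have i1: "s ` {a,x,y,t} \<in> Bs" by (rule caseB) (use K t bK in auto)
    have i2: "s ` {a,t,z,w} \<in> Bs" by (rule caseB[OF K']) (use bK' in auto)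
    have f1: "{b, s t, s x, s y} \<in> Bs" using i1 sa by (simp add: insert_commute)
    have f2: "{b, s t, s z, s w} \<in> Bs" using i2 sa by (simp add: insert_commute)
    have "distinct [a,t,x,y,z,w]" using HM t tz tw by auto
    hence "distinct (map s [a,t,x,y,z,w])" using inj_s by (simp add: distinct_map inj_on_def) blast
    hence "distinct [b, s t, s x, s y, s z, s w]" using sa by simp
    hence "{s x, s y, s z, s w} \<in> Bs" by (rule tri6[OF f1 f2])
    moreover have "s ` M = {s x, s y, s z, s w}" using HM(1) by simp
    ultimately show ?thesis by simp
  qed
qed

lemma caseC:
  assumes "M \<in> Bs" "a \<notin> M" "b \<notin> M"
  shows "s ` M \<in> Bs"
proof -
  obtain p q r w where M: "M = {p,q,r,w}" "distinct [p,q,r,w]" using line_any[OF assms(1)] by blast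
  show ?thesis
  proof (cases "col Bs {a,p,q}")
    case True thus ?thesis by (rule C1[OF M(1) assms(1) M(2) assms(2,3)])
  next
    case F1: False
    show ?thesis
    proof (cases "col Bs {a,p,r}")
      case True
      have "M = {p,r,q,w}" "distinct [p,r,q,w]" using M by auto
      thus ?thesis using C1 True assms by blast
    next
      case F2: False
      have O: "{a,q,r,p} \<subseteq> Omega" using MO[OF assms(1)] M aO by auto
      have c1: "col Bs {q,r,p}" by (rule colI[OF assms(1)]) (use M in auto)
      have c2: "\<not> col Bs {a,r,p}" using F2 by (simp add: insert_commute)
      have c3: "\<not> col Bs {a,q,p}" using F1 by (simp add: insert_commute)
      have "col Bs {a,q,r}" by (rule par1[OF _ O c1 c2 c3]) (use M assms in auto)
      moreover have "M = {q,r,p,w}" "distinct [q,r,p,w]" using M by auto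
      ultimately show ?thesis using C1 assms by blast
    qed
  qed
qed

lemma main: "M \<in> Bs \<Longrightarrow> s ` M \<in> Bs"
proof -
  assume M: "M \<in> Bs"
  interpret ba: D2 Omega Bs b a using ab aO bO by unfold_locales auto
  consider "a \<in> M" "b \<in> M" | "a \<in> M" "b \<notin> M" | "a \<notin> M" "b \<in> M" | "a \<notin> M" "b \<notin> M" by blast
  then show ?thesis
  proof cases
    case 1
    obtain x y where xy: "M = {a,b,x,y}" "distinct [a,b,x,y]" using line_pt2[OF M 1 ab] by blast
    have k1: "{a,b,x,y} \<in> Bs" using M xy by simp
    have sxy: "s x = y"
    proof -
      have "{a,b,x,y} = {a,b,x,s x}" by (rule swp_leq[OF k1]) (use xy ab in auto)
      moreover have "s x \<notin> {a,b,x}" using mv[of x] colI[OF k1, of "{a,b,x}"] xy by auto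
      moreover have "y \<notin> {a,b,x}" using xy by auto
      ultimately show ?thesis using fourth by metis
    qed
    have "s y = x" using sxy sinv by metis
    hence "s ` M = M" using xy(1) sxy sa sb by auto
    thus ?thesis using M by simp
  next
    case 2 thus ?thesis using caseB M by blast
  next
    case 3 thus ?thesis using ba.caseB[OF M] swp_sym by metis
  next
    case 4 thus ?thesis using caseC M by blast
  qed
qed

end

context D
begin

lemma conj:
  assumes bf: "bij f" and pf: "\<And>L. L \<in> Bs \<longleftrightarrow> f ` L \<in> Bs"
  shows "swp Bs (f x) (f y) (f z) = f (swp Bs x y z)"
proof -
  have inj: "inj f" using bf bij_is_inj by blast
  have ff: "\<And>u v. (f u = f v) = (u = v)" using inj by (simp add: inj_eq)
  show ?thesis
  proof (cases "x = y \<or> z = x \<or> z = y")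
    case True
    thus ?thesis unfolding swp_def using ff by auto
  next
    case False
    hence d: "x \<noteq> y" "z \<noteq> x" "z \<noteq> y" by auto
    have fd: "f x \<noteq> f y" "f z \<noteq> f x" "f z \<noteq> f y" using d ff by auto
    have colf: "col Bs {f x, f y, f z} \<longleftrightarrow> col Bs {x,y,z}"
    proof
      assume "col Bs {f x, f y, f z}"
      then obtain L where L: "L \<in> Bs" "{f x, f y, f z} \<subseteq> L" unfolding col_def by blast
      have "f ` (inv f ` L) = L" using bij_is_surj[OF bf] by (simp add: image_comp surj_f_inv_f)
      hence "inv f ` L \<in> Bs" using pf[of "inv f ` L"] L(1) by simp
      moreover have "\<And>u. f u \<in> L \<Longrightarrow> u \<in> inv f ` L" by (metis image_eqI inv_f_f[OF inj])
      hence "{x,y,z} \<subseteq> inv f ` L" using L(2) by auto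
      ultimately show "col Bs {x,y,z}" by (rule colI)
    next
      assume "col Bs {x,y,z}"
      then obtain L where L: "L \<in> Bs" "{x,y,z} \<subseteq> L" unfolding col_def by blast
      have "f ` L \<in> Bs" using pf L(1) by simp
      moreover have "{f x, f y, f z} \<subseteq> f ` L" using L(2) by auto
      ultimately show "col Bs {f x, f y, f z}" by (rule colI)
    qed
    show ?thesis
    proof (cases "col Bs {x,y,z}")
      case True
      have m: "{x,y,z,swp Bs x y z} \<in> Bs" "swp Bs x y z \<notin> {x,y,z}"
        using swp_moved[OF d(1) d(2) d(3) True] by auto
      have m2: "{f x, f y, f z, f (swp Bs x y z)} \<in> Bs"
        using pf[of "{x,y,z,swp Bs x y z}"] m(1) by simp
      have m3: "f (swp Bs x y z) \<notin> {f x, f y, f z}" using m(2) ff by auto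
      have m4: "swp Bs (f x) (f y) (f z) \<notin> {f x, f y, f z}"
        using swp_moved[OF fd(1) fd(2) fd(3)] colf True by auto
      have "{f x, f y, f z, f (swp Bs x y z)} = {f x, f y, f z, swp Bs (f x) (f y) (f z)}"
        by (rule swp_leq[OF m2]) (use fd in auto)
      thus ?thesis using m3 m4 fourth by metis
    next
      case nc: False
      thus ?thesis using swp_fix d fd colf by auto
    qed
  qed
qed

lemma good:
  assumes "g \<in> gen_group {swp Bs a b | a b. a \<in> Omega \<and> b \<in> Omega}"
  shows "bij g \<and> (\<forall>L. L \<in> Bs \<longleftrightarrow> g ` L \<in> Bs)"
  using assms
proof (induction rule: gen_group.induct)
  case gen_id thus ?case by (simp add: bij_def inj_on_def)
next
  case (gen_elem e)
  then obtain a b where e: "e = swp Bs a b" "a \<in> Omega" "b \<in> Omega" by blast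
  show ?case
  proof (cases "a = b")
    case True thus ?thesis using e swp_same by (simp add: bij_def inj_on_def)
  next
    case False
    interpret d2: D2 Omega Bs a b using False e by unfold_locales auto
    have ee: "e \<circ> e = id" using e d2.sinv by (simp add: comp_def fun_eq_iff)
    have "bij e" using o_bij[OF ee ee] .
    moreover have "\<forall>L. L \<in> Bs \<longleftrightarrow> e ` L \<in> Bs"
    proof (intro allI iffI)
      fix L assume "L \<in> Bs" thus "e ` L \<in> Bs" using d2.main e by simp
    next
      fix L assume "e ` L \<in> Bs"
      hence "e ` (e ` L) \<in> Bs" using d2.main e by simp
      moreover have "e ` (e ` L) = L" using ee by (simp add: image_comp)
      ultimately show "L \<in> Bs" by simp
    qed
    ultimately show ?thesis by blast
  qed
next
  case (gen_comp f g)
  have "bij (f \<circ> g)" using bij_comp gen_comp.IH by blast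
  moreover have "\<And>L. (f \<circ> g) ` L = f ` (g ` L)" by (simp add: image_comp)
  ultimately show ?case using gen_comp.IH by (metis (no_types, lifting))
next
  case (gen_inv f)
  have "bij (inv f)" using gen_inv bij_imp_bij_inv by blast
  moreover have "\<forall>L. L \<in> Bs \<longleftrightarrow> inv f ` L \<in> Bs"
  proof
    fix L
    have "f ` (inv f ` L) = L" using bij_is_surj[of f] gen_inv.IH by (simp add: image_comp surj_f_inv_f)
    thus "L \<in> Bs \<longleftrightarrow> inv f ` L \<in> Bs" using gen_inv by metis
  qed
  ultimately show ?case by blast
qed

end

theorem lemma4p6:
  fixes Omega :: "'a set" and Bs :: "'a set set" and lam :: nat
  assumes "two_design Omega 4 Bs lam"
    and "supersimple Bs"
    and "prop_triangle Bs"
    and "regular_two_graph Omega (collinear_triples Bs)"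
    and "g \<in> gen_group {swp Bs a b | a b. a \<in> Omega \<and> b \<in> Omega}"
    and "x \<in> Omega" and "y \<in> Omega"
  shows "g \<circ> swp Bs x y \<circ> inv g = swp Bs (g x) (g y)"
proof -
  interpret D Omega Bs
  proof
    show "\<And>B. B \<in> Bs \<Longrightarrow> B \<subseteq> Omega \<and> card B = 4" using assms(1) unfolding two_design_def by blast
    show "supersimple Bs" by fact
    show "prop_triangle Bs" by fact
    show "\<And>F. F \<subseteq> Omega \<Longrightarrow> card F = 4 \<Longrightarrow> card {T\<in>collinear_triples Bs. T \<subseteq> F} \<in> {0,2,4}"
      using assms(4) unfolding regular_two_graph_def by blast
  qed
  have g: "bij g" "\<And>L. L \<in> Bs \<longleftrightarrow> g ` L \<in> Bs" using good[OF assms(5)] by auto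
  show ?thesis
  proof
    fix w
    have "g (inv g w) = w" using g(1) by (simp add: bij_is_surj surj_f_inv_f)
    hence "swp Bs (g x) (g y) w = g (swp Bs x y (inv g w))"
      using conj[OF g(1) g(2), of x y "inv g w"] by simp
    thus "(g \<circ> swp Bs x y \<circ> inv g) w = swp Bs (g x) (g y) w" by simp
  qed
qed

end
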